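(* Let $L$ be a linear ordering and let $\Phi(L)$ be the colored linear ordering defined in the context. Then the structure $(L,<,s,p)$ is homogeneous if and only if $\Phi(L)$ is homogeneous.
   Context: For a linear ordering $L$, $s(x)$ is the immediate successor of $x$ if it exists and $x$ otherwise; $p(x)$ is the immediate predecessor of $x$ if it exists and $x$ otherwise. A structure is homogeneous if every isomorphism between finitely generated substructures extends to an automorphism. The equivalence relation $x\sim_1 y$ holds iff only finitely many elements lie between $x$ and $y$; its classes (1-blocks) are convex, and each is isomorphic to $\omega$, $\omega^*$, $\zeta$ or a finite $n\ge1$. $\Phi(L)$ is the quotient ordering $L/\sim_1$ (with $[x]<[y]$ iff $x<y$ for elements of distinct blocks), expanded by unary predicates $w,z,sw,c_n$ ($n\ge1$): $w([x])$ iff $[x]\cong\omega$, $z([x])$ iff $[x]\cong\zeta$, $sw([x])$ iff $[x]\cong\omega^*$, and $c_n([x])$ iff $[x]$ has exactly $n$ elements. $\Phi(L)$ is regarded as a structure in the language $(<,w,z,sw,\{c_n\}_{n\ge1})$. *)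

theory Defs
  imports Main
begin

definition strict_linear_on :: "'a set \<Rightarrow> ('a \<Rightarrow> 'a \<Rightarrow> bool) \<Rightarrow> bool" where
  "strict_linear_on A lt \<longleftrightarrow>
     (\<forall>x\<in>A. \<not> lt x x) \<and>
     (\<forall>x\<in>A. \<forall>y\<in>A. \<forall>z\<in>A. lt x y \<longrightarrow> lt y z \<longrightarrow> lt x z) \<and>
     (\<forall>x\<in>A. \<forall>y\<in>A. x \<noteq> y \<longrightarrow> lt x y \<or> lt y x)"

definition is_succ :: "'a set \<Rightarrow> ('a \<Rightarrow> 'a \<Rightarrow> bool) \<Rightarrow> 'a \<Rightarrow> 'a \<Rightarrow> bool" where
  "is_succ A lt x y \<longleftrightarrow> y \<in> A \<and> lt x y \<and> \<not> (\<exists>z\<in>A. lt x z \<and> lt z y)"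

definition is_pred :: "'a set \<Rightarrow> ('a \<Rightarrow> 'a \<Rightarrow> bool) \<Rightarrow> 'a \<Rightarrow> 'a \<Rightarrow> bool" where
  "is_pred A lt x y \<longleftrightarrow> y \<in> A \<and> lt y x \<and> \<not> (\<exists>z\<in>A. lt y z \<and> lt z x)"

definition succ_fn :: "'a set \<Rightarrow> ('a \<Rightarrow> 'a \<Rightarrow> bool) \<Rightarrow> 'a \<Rightarrow> 'a" where
  "succ_fn A lt x = (if \<exists>y. is_succ A lt x y then (THE y. is_succ A lt x y) else x)"

definition pred_fn :: "'a set \<Rightarrow> ('a \<Rightarrow> 'a \<Rightarrow> bool) \<Rightarrow> 'a \<Rightarrow> 'a" where
  "pred_fn A lt x = (if \<exists>y. is_pred A lt x y then (THE y. is_pred A lt x y) else x)"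

definition gen_sp :: "'a set \<Rightarrow> ('a \<Rightarrow> 'a \<Rightarrow> bool) \<Rightarrow> 'a set \<Rightarrow> 'a set" where
  "gen_sp A lt X = \<Inter> {S. X \<subseteq> S \<and> S \<subseteq> A \<and>
       (\<forall>x\<in>S. succ_fn A lt x \<in> S \<and> pred_fn A lt x \<in> S)}"

definition homogeneous_sp :: "'a set \<Rightarrow> ('a \<Rightarrow> 'a \<Rightarrow> bool) \<Rightarrow> bool" where
  "homogeneous_sp A lt \<longleftrightarrow>
    (\<forall>X Y f. finite X \<and> X \<subseteq> A \<and> finite Y \<and> Y \<subseteq> A \<and>
       bij_betw f (gen_sp A lt X) (gen_sp A lt Y) \<and>
       (\<forall>x\<in>gen_sp A lt X. \<forall>y\<in>gen_sp A lt X. lt x y \<longleftrightarrow> lt (f x) (f y)) \<and>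
       (\<forall>x\<in>gen_sp A lt X. f (succ_fn A lt x) = succ_fn A lt (f x) \<and>
                            f (pred_fn A lt x) = pred_fn A lt (f x))
     \<longrightarrow>
     (\<exists>g. bij_betw g A A \<and>
        (\<forall>x\<in>A. \<forall>y\<in>A. lt x y \<longleftrightarrow> lt (g x) (g y)) \<and>
        (\<forall>x\<in>A. g (succ_fn A lt x) = succ_fn A lt (g x) \<and>
                 g (pred_fn A lt x) = pred_fn A lt (g x)) \<and>
        (\<forall>x\<in>gen_sp A lt X. g x = f x)))"

definition betw :: "'a set \<Rightarrow> ('a \<Rightarrow> 'a \<Rightarrow> bool) \<Rightarrow> 'a \<Rightarrow> 'a \<Rightarrow> 'a set" where
  "betw A lt x y = {z\<in>A. (lt x z \<and> lt z y) \<or> (lt y z \<and> lt z x)}"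

definition sim1 :: "'a set \<Rightarrow> ('a \<Rightarrow> 'a \<Rightarrow> bool) \<Rightarrow> 'a \<Rightarrow> 'a \<Rightarrow> bool" where
  "sim1 A lt x y \<longleftrightarrow> x \<in> A \<and> y \<in> A \<and> finite (betw A lt x y)"

definition block :: "'a set \<Rightarrow> ('a \<Rightarrow> 'a \<Rightarrow> bool) \<Rightarrow> 'a \<Rightarrow> 'a set" where
  "block A lt x = {y. sim1 A lt x y}"

definition Phi_carrier :: "'a set \<Rightarrow> ('a \<Rightarrow> 'a \<Rightarrow> bool) \<Rightarrow> 'a set set" where
  "Phi_carrier A lt = block A lt ` A"

definition Phi_less :: "'a set \<Rightarrow> ('a \<Rightarrow> 'a \<Rightarrow> bool) \<Rightarrow> 'a set \<Rightarrow> 'a set \<Rightarrow> bool" where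
  "Phi_less A lt B C \<longleftrightarrow> B \<noteq> C \<and> (\<exists>x\<in>B. \<exists>y\<in>C. lt x y)"

definition order_iso_to :: "'a set \<Rightarrow> ('a \<Rightarrow> 'a \<Rightarrow> bool) \<Rightarrow> 'b set \<Rightarrow> ('b \<Rightarrow> 'b \<Rightarrow> bool) \<Rightarrow> bool" where
  "order_iso_to B lt S lt' \<longleftrightarrow>
     (\<exists>f. bij_betw f B S \<and> (\<forall>x\<in>B. \<forall>y\<in>B. lt x y \<longleftrightarrow> lt' (f x) (f y)))"

datatype color = W | Z | SW | C nat

fun Phi_col :: "'a set \<Rightarrow> ('a \<Rightarrow> 'a \<Rightarrow> bool) \<Rightarrow> 'a set \<Rightarrow> color \<Rightarrow> bool" where
  "Phi_col A lt B W = order_iso_to B lt (UNIV :: nat set) (<)"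
| "Phi_col A lt B Z = order_iso_to B lt (UNIV :: int set) (<)"
| "Phi_col A lt B SW = order_iso_to B lt (UNIV :: nat set) (>)"
| "Phi_col A lt B (C n) = (n \<ge> 1 \<and> finite B \<and> card B = n)"

text \<open>Homogeneity of a coloured (purely relational) linear ordering: finitely generated
  substructures are finite subsets.\<close>
definition homogeneous_col :: "'b set \<Rightarrow> ('b \<Rightarrow> 'b \<Rightarrow> bool) \<Rightarrow> ('b \<Rightarrow> 'c \<Rightarrow> bool) \<Rightarrow> bool" where
  "homogeneous_col D R Q \<longleftrightarrow>
    (\<forall>X Y f. finite X \<and> X \<subseteq> D \<and> Y \<subseteq> D \<and> bij_betw f X Y \<and>
       (\<forall>x\<in>X. \<forall>y\<in>X. R x y \<longleftrightarrow> R (f x) (f y)) \<and>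
       (\<forall>x\<in>X. \<forall>c. Q x c \<longleftrightarrow> Q (f x) c)
     \<longrightarrow>
     (\<exists>g. bij_betw g D D \<and>
        (\<forall>x\<in>D. \<forall>y\<in>D. R x y \<longleftrightarrow> R (g x) (g y)) \<and>
        (\<forall>x\<in>D. \<forall>c. Q x c \<longleftrightarrow> Q (g x) c) \<and>
        (\<forall>x\<in>X. g x = f x)))"

end

theory Submission
  imports Defs
begin


definition oiso :: "('a \<Rightarrow> 'b) \<Rightarrow> 'a set \<Rightarrow> ('a \<Rightarrow> 'a \<Rightarrow> bool) \<Rightarrow> 'b set \<Rightarrow> ('b \<Rightarrow> 'b \<Rightarrow> bool) \<Rightarrow> bool" where
  "oiso f B r S r' \<longleftrightarrow> bij_betw f B S \<and> (\<forall>x\<in>B. \<forall>y\<in>B. r x y \<longleftrightarrow> r' (f x) (f y))"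

lemma order_iso_to_oiso: "order_iso_to B r S r' \<longleftrightarrow> (\<exists>f. oiso f B r S r')"
  unfolding order_iso_to_def oiso_def by blast

lemma oiso_inv:
  assumes "oiso f B r S r'" shows "oiso (inv_into B f) S r' B r"
proof -
  have b: "bij_betw f B S" and o: "\<forall>x\<in>B. \<forall>y\<in>B. r x y \<longleftrightarrow> r' (f x) (f y)"
    using assms unfolding oiso_def by auto
  have b2: "bij_betw (inv_into B f) S B" using b by (rule bij_betw_inv_into)
  have "\<forall>u\<in>S. \<forall>v\<in>S. r' u v \<longleftrightarrow> r (inv_into B f u) (inv_into B f v)"
  proof (intro ballI)
    fix u v assume u: "u \<in> S" and v: "v \<in> S"
    have iu: "inv_into B f u \<in> B" "f (inv_into B f u) = u"
      using b u by (auto simp: bij_betw_def inv_into_into f_inv_into_f)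
    have iv: "inv_into B f v \<in> B" "f (inv_into B f v) = v"
      using b v by (auto simp: bij_betw_def inv_into_into f_inv_into_f)
    show "r' u v \<longleftrightarrow> r (inv_into B f u) (inv_into B f v)"
    proof -
      have "r' u v \<longleftrightarrow> r' (f (inv_into B f u)) (f (inv_into B f v))" using iu iv by simp
      also have "\<dots> \<longleftrightarrow> r (inv_into B f u) (inv_into B f v)" using o iu(1) iv(1) by blast
      finally show ?thesis .
    qed
  qed
  then show ?thesis using b2 unfolding oiso_def by blast
qed

lemma oiso_comp:
  assumes "oiso f B r S r'" "oiso g S r' T r''" shows "oiso (g \<circ> f) B r T r''"
proof -
  have "bij_betw (g \<circ> f) B T" using assms unfolding oiso_def using bij_betw_trans by blast
  moreover have "f ` B = S" using assms(1) unfolding oiso_def bij_betw_def by blast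
  moreover have "\<forall>x\<in>B. \<forall>y\<in>B. r x y \<longleftrightarrow> r'' ((g \<circ> f) x) ((g \<circ> f) y)"
  proof (intro ballI)
    fix x y assume "x \<in> B" "y \<in> B"
    then have "f x \<in> S" "f y \<in> S" using \<open>f ` B = S\<close> by auto
    then show "r x y \<longleftrightarrow> r'' ((g \<circ> f) x) ((g \<circ> f) y)"
      using assms \<open>x \<in> B\<close> \<open>y \<in> B\<close> unfolding oiso_def by simp
  qed
  ultimately show ?thesis unfolding oiso_def by blast
qed

lemma order_iso_to_sym: "order_iso_to B r S r' \<Longrightarrow> order_iso_to S r' B r"
  unfolding order_iso_to_oiso using oiso_inv by blast

lemma order_iso_to_trans: "order_iso_to B r S r' \<Longrightarrow> order_iso_to S r' T r'' \<Longrightarrow> order_iso_to B r T r''"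
  unfolding order_iso_to_oiso using oiso_comp by blast

lemma slo_sub: "strict_linear_on A lt \<Longrightarrow> S \<subseteq> A \<Longrightarrow> strict_linear_on S lt"
  unfolding strict_linear_on_def by blast

lemma slo_flip: "strict_linear_on A lt \<Longrightarrow> strict_linear_on A (\<lambda>x y. lt y x)"
  unfolding strict_linear_on_def by blast

lemma slo_irr: "strict_linear_on A lt \<Longrightarrow> x \<in> A \<Longrightarrow> \<not> lt x x"
  unfolding strict_linear_on_def by blast

lemma slo_trans: "strict_linear_on A lt \<Longrightarrow> x \<in> A \<Longrightarrow> y \<in> A \<Longrightarrow> z \<in> A \<Longrightarrow> lt x y \<Longrightarrow> lt y z \<Longrightarrow> lt x z"
  unfolding strict_linear_on_def by blast

lemma slo_total: "strict_linear_on A lt \<Longrightarrow> x \<in> A \<Longrightarrow> y \<in> A \<Longrightarrow> x \<noteq> y \<Longrightarrow> lt x y \<or> lt y x"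
  unfolding strict_linear_on_def by blast

lemma slo_asym: "strict_linear_on A lt \<Longrightarrow> x \<in> A \<Longrightarrow> y \<in> A \<Longrightarrow> lt x y \<Longrightarrow> \<not> lt y x"
  using slo_irr slo_trans by metis

lemma finite_max:
  assumes "strict_linear_on A lt" "finite F" "F \<noteq> {}" "F \<subseteq> A"
  shows "\<exists>m\<in>F. \<forall>y\<in>F. y \<noteq> m \<longrightarrow> lt y m"
  using assms(2,3,4)
proof (induction F rule: finite_ne_induct)
  case (singleton x) then show ?case by auto
next
  case (insert x F)
  then obtain m where m: "m \<in> F" "\<forall>y\<in>F. y \<noteq> m \<longrightarrow> lt y m" by auto
  have xA: "x \<in> A" and mA: "m \<in> A" and FA: "F \<subseteq> A" using insert m by auto
  have xm: "x \<noteq> m" using insert.hyps m(1) by auto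
  show ?case
  proof (cases "lt x m")
    case True then show ?thesis using m by auto
  next
    case False
    then have mx: "lt m x" using slo_total[OF assms(1) xA mA xm] by simp
    have "\<forall>y\<in>insert x F. y \<noteq> x \<longrightarrow> lt y x"
    proof (intro ballI impI)
      fix y assume "y \<in> insert x F" "y \<noteq> x"
      then have y: "y \<in> F" by simp
      show "lt y x"
      proof (cases "y = m")
        case True then show ?thesis using mx by simp
      next
        case False
        then have "lt y m" using m y by blast
        then show ?thesis using slo_trans[OF assms(1) _ mA xA] y FA mx by blast
      qed
    qed
    then show ?thesis by blast
  qed
qed

lemma rank_mono:
  assumes "strict_linear_on S r" "\<forall>x\<in>S. finite {y\<in>S. r y x}"
    "x \<in> S" "y \<in> S" "r x y"
  shows "card {z\<in>S. r z x} < card {z\<in>S. r z y}"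
proof -
  have "{z\<in>S. r z x} \<subset> {z\<in>S. r z y}"
    using assms unfolding strict_linear_on_def by blast
  then show ?thesis using assms(2,4) by (simp add: psubset_card_mono)
qed

lemma strict_mono_oiso:
  assumes "strict_linear_on S r" "\<forall>x\<in>S. \<forall>y\<in>S. r x y \<longrightarrow> f x < f y" "f ` S = T"
  shows "oiso f S r T ((<) :: 'b::linorder \<Rightarrow> 'b \<Rightarrow> bool)"
proof -
  have lin: "\<forall>x\<in>S. \<forall>y\<in>S. x \<noteq> y \<longrightarrow> r x y \<or> r y x" using assms(1) unfolding strict_linear_on_def by blast
  have inj: "inj_on f S"
    unfolding inj_on_def using lin assms(2) by (metis less_irrefl)
  have "\<forall>x\<in>S. \<forall>y\<in>S. r x y \<longleftrightarrow> f x < f y"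
    using lin assms(2) by (metis less_asym less_irrefl)
  then show ?thesis using inj assms(3) unfolding oiso_def bij_betw_def by blast
qed

lemma strict_mono_oiso_gt:
  assumes "strict_linear_on S r" "\<forall>x\<in>S. \<forall>y\<in>S. r x y \<longrightarrow> f x > f y" "f ` S = T"
  shows "oiso f S r T (\<lambda>a b. (a :: 'b::linorder) > b)"
proof -
  have lin: "\<forall>x\<in>S. \<forall>y\<in>S. x \<noteq> y \<longrightarrow> r x y \<or> r y x" using assms(1) unfolding strict_linear_on_def by blast
  have inj: "inj_on f S"
    unfolding inj_on_def using lin assms(2) by (metis less_irrefl)
  have "\<forall>x\<in>S. \<forall>y\<in>S. r x y \<longleftrightarrow> f x > f y"
    using lin assms(2) by (metis less_asym less_irrefl)
  then show ?thesis using inj assms(3) unfolding oiso_def bij_betw_def by blast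
qed

lemma rank_image_down:
  assumes "strict_linear_on S r" "\<forall>x\<in>S. finite {y\<in>S. r y x}" "x \<in> S"
  shows "(\<lambda>x. card {z\<in>S. r z x}) ` {y\<in>S. r y x} = {0..<card {z\<in>S. r z x}}"
proof -
  let ?rk = "\<lambda>x. card {z\<in>S. r z x}"
  have inj: "inj_on ?rk S"
    unfolding inj_on_def using assms rank_mono[OF assms(1,2)] unfolding strict_linear_on_def
    by (metis less_irrefl)
  have sub: "?rk ` {y\<in>S. r y x} \<subseteq> {0..<?rk x}"
    using rank_mono[OF assms(1,2)] assms(3) by auto
  have "card (?rk ` {y\<in>S. r y x}) = ?rk x"
    using card_image[OF inj_on_subset[OF inj]] by auto
  then show ?thesis using sub by (simp add: card_subset_eq)
qed

lemma rank_infinite: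
  assumes "strict_linear_on S r" "\<forall>x\<in>S. finite {y\<in>S. r y x}" "infinite S"
  shows "oiso (\<lambda>x. card {z\<in>S. r z x}) S r (UNIV :: nat set) (<)"
proof -
  let ?rk = "\<lambda>x. card {z\<in>S. r z x}"
  have inj: "inj_on ?rk S"
    unfolding inj_on_def using assms rank_mono[OF assms(1,2)] unfolding strict_linear_on_def
    by (metis less_irrefl)
  have inf: "infinite (?rk ` S)" using inj assms(3) finite_image_iff by blast
  have img: "?rk ` S = UNIV"
  proof (rule set_eqI, rule iffI)
    fix j :: nat assume "j \<in> UNIV"
    from inf have "\<not> (\<forall>n\<in>?rk ` S. n < Suc j)" using finite_nat_set_iff_bounded by blast
    then obtain k where "k \<in> ?rk ` S" "j < k" by (meson not_less_eq)
    then obtain x where x: "x \<in> S" "j < ?rk x" by auto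
    then have "j \<in> ?rk ` {y\<in>S. r y x}" using rank_image_down[OF assms(1,2) x(1)] by auto
    then show "j \<in> ?rk ` S" by auto
  qed auto
  have mono: "\<forall>x\<in>S. \<forall>y\<in>S. r x y \<longrightarrow> ?rk x < ?rk y" using rank_mono[OF assms(1,2)] by blast
  show ?thesis by (rule strict_mono_oiso[OF assms(1) mono img])
qed

lemma rank_finite:
  assumes "strict_linear_on S r" "finite S"
  shows "oiso (\<lambda>x. card {z\<in>S. r z x}) S r {0..<card S} (<)"
proof -
  let ?rk = "\<lambda>x. card {z\<in>S. r z x}"
  have fin: "\<forall>x\<in>S. finite {y\<in>S. r y x}" using assms(2) by auto
  have inj: "inj_on ?rk S"
    unfolding inj_on_def using assms rank_mono[OF assms(1) fin] unfolding strict_linear_on_def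
    by (metis less_irrefl)
  have sub: "?rk ` S \<subseteq> {0..<card S}"
  proof
    fix j assume "j \<in> ?rk ` S"
    then obtain x where x: "x \<in> S" "j = ?rk x" by auto
    have "{z\<in>S. r z x} \<subset> S" using x assms(1) unfolding strict_linear_on_def by blast
    then show "j \<in> {0..<card S}" using x assms(2) by (simp add: psubset_card_mono)
  qed
  have "card (?rk ` S) = card S" using card_image[OF inj] .
  then have img: "?rk ` S = {0..<card S}" using sub by (simp add: card_subset_eq)
  have mono: "\<forall>x\<in>S. \<forall>y\<in>S. r x y \<longrightarrow> ?rk x < ?rk y" using rank_mono[OF assms(1) fin] by blast
  show ?thesis by (rule strict_mono_oiso[OF assms(1) mono img])
qed



lemma betw_flip: "betw A (\<lambda>x y. lt y x) = betw A lt"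
  by (intro ext) (auto simp: betw_def)

lemma sim1_flip: "sim1 A (\<lambda>x y. lt y x) = sim1 A lt"
  by (intro ext) (simp add: sim1_def betw_flip[of A lt])

lemma block_flip: "block A (\<lambda>x y. lt y x) = block A lt"
  by (intro ext) (simp add: block_def sim1_flip[of A lt])

lemma is_succ_flip: "is_succ A (\<lambda>x y. lt y x) = is_pred A lt"
  by (intro ext) (auto simp: is_succ_def is_pred_def)

lemma is_pred_flip: "is_pred A (\<lambda>x y. lt y x) = is_succ A lt"
  by (intro ext) (auto simp: is_succ_def is_pred_def)

lemma succ_flip: "succ_fn A (\<lambda>x y. lt y x) = pred_fn A lt"
  by (intro ext) (simp add: succ_fn_def pred_fn_def is_succ_flip[of A lt])

lemma pred_flip: "pred_fn A (\<lambda>x y. lt y x) = succ_fn A lt"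
  by (intro ext) (simp add: succ_fn_def pred_fn_def is_pred_flip[of A lt])

locale slo =
  fixes A :: "'a set" and lt :: "'a \<Rightarrow> 'a \<Rightarrow> bool"
  assumes slo: "strict_linear_on A lt"
begin

lemma irr: "x \<in> A \<Longrightarrow> \<not> lt x x" using slo_irr[OF slo] .
lemma tr: "x \<in> A \<Longrightarrow> y \<in> A \<Longrightarrow> z \<in> A \<Longrightarrow> lt x y \<Longrightarrow> lt y z \<Longrightarrow> lt x z"
  using slo_trans[OF slo] .
lemma tot: "x \<in> A \<Longrightarrow> y \<in> A \<Longrightarrow> x \<noteq> y \<Longrightarrow> lt x y \<or> lt y x"
  using slo_total[OF slo] .
lemma asy: "x \<in> A \<Longrightarrow> y \<in> A \<Longrightarrow> lt x y \<Longrightarrow> \<not> lt y x"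
  using slo_asym[OF slo] .

lemma flip_slo: "slo A (\<lambda>x y. lt y x)"
  unfolding slo_def using slo_flip[OF slo] .

abbreviation "blk \<equiv> block A lt"
abbreviation "sc \<equiv> succ_fn A lt"
abbreviation "pc \<equiv> pred_fn A lt"

lemma betw_sym: "betw A lt x y = betw A lt y x" unfolding betw_def by blast

lemma betw_sub:
  assumes "y \<in> A" shows "betw A lt x z \<subseteq> betw A lt x y \<union> betw A lt y z \<union> {y}"
proof
  fix w assume w: "w \<in> betw A lt x z"
  then have wA: "w \<in> A" by (simp add: betw_def)
  show "w \<in> betw A lt x y \<union> betw A lt y z \<union> {y}"
  proof (cases "w = y")
    case False
    then have "lt w y \<or> lt y w" using tot[OF wA assms] by blast
    then show ?thesis using w wA by (auto simp: betw_def)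
  qed simp
qed

lemma betw_refl: "x \<in> A \<Longrightarrow> betw A lt x x = {}"
  unfolding betw_def using tr irr by blast

lemma sim1_refl: "x \<in> A \<Longrightarrow> sim1 A lt x x"
  by (simp add: sim1_def betw_refl)

lemma sim1_sym: "sim1 A lt x y \<Longrightarrow> sim1 A lt y x"
  by (simp add: sim1_def betw_sym)

lemma sim1_trans: "sim1 A lt x y \<Longrightarrow> sim1 A lt y z \<Longrightarrow> sim1 A lt x z"
  unfolding sim1_def using betw_sub finite_subset by (metis finite_Un finite.insertI insert_is_Un sup_commute)

lemma in_blk: "x \<in> A \<Longrightarrow> x \<in> blk x"
  by (simp add: block_def sim1_refl)

lemma blk_A: "y \<in> blk x \<Longrightarrow> y \<in> A" "y \<in> blk x \<Longrightarrow> x \<in> A"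
  by (auto simp: block_def sim1_def)

lemma blk_subA: "blk x \<subseteq> A" using blk_A by blast

lemma blk_eq: "y \<in> blk x \<Longrightarrow> blk y = blk x"
  unfolding block_def using sim1_sym sim1_trans by blast

lemma blk_sym: "y \<in> blk x \<Longrightarrow> x \<in> blk y"
  unfolding block_def using sim1_sym by blast

lemma blk_disj: "z \<in> blk x \<Longrightarrow> z \<in> blk y \<Longrightarrow> blk x = blk y"
  using blk_eq by metis

lemma blk_finite_betw: "y \<in> blk x \<Longrightarrow> finite (betw A lt x y)"
  by (simp add: block_def sim1_def)

lemma blk_convex0:
  assumes "y \<in> blk x" "w \<in> A" "lt x w" "lt w y"
  shows "w \<in> blk x"
proof -
  have "betw A lt x w \<subseteq> betw A lt x y"
    unfolding betw_def using assms tr blk_A by blast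
  then have "finite (betw A lt x w)" using finite_subset blk_finite_betw[OF assms(1)] by blast
  then show ?thesis using blk_A(2)[OF assms(1)] assms(2) by (simp add: block_def sim1_def)
qed

lemma blk_convex:
  assumes "u \<in> blk x" "v \<in> blk x" "w \<in> A" "lt u w" "lt w v"
  shows "w \<in> blk x"
proof -
  have "v \<in> blk u" using assms blk_eq by metis
  then have "w \<in> blk u" using blk_convex0 assms by blast
  then show ?thesis using blk_eq assms(1) by metis
qed

lemma carrier_iff: "B \<in> Phi_carrier A lt \<longleftrightarrow> (\<exists>a\<in>A. B = blk a)"
  by (auto simp: Phi_carrier_def)

lemma carrier_blk: "B \<in> Phi_carrier A lt \<Longrightarrow> x \<in> B \<Longrightarrow> B = blk x"
  unfolding carrier_iff using blk_eq by metis

lemma carrier_sub: "B \<in> Phi_carrier A lt \<Longrightarrow> B \<subseteq> A"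
  unfolding carrier_iff using blk_subA by blast

lemma carrier_ne: "B \<in> Phi_carrier A lt \<Longrightarrow> B \<noteq> {}"
  unfolding carrier_iff using in_blk by blast

lemma blk_carrier: "x \<in> A \<Longrightarrow> blk x \<in> Phi_carrier A lt"
  unfolding carrier_iff by blast

lemma Union_carrier: "\<Union> (Phi_carrier A lt) = A"
  unfolding Phi_carrier_def using blk_subA in_blk by blast

lemma succ_unique: "is_succ A lt x y \<Longrightarrow> is_succ A lt x y' \<Longrightarrow> y = y'"
  unfolding is_succ_def using tot by blast

lemma succ_fn_eq: "is_succ A lt x y \<Longrightarrow> sc x = y"
  unfolding succ_fn_def using succ_unique by (metis (no_types, lifting) the_equality)

lemma succ_fn_none: "\<not> (\<exists>y. is_succ A lt x y) \<Longrightarrow> sc x = x"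
  unfolding succ_fn_def by presburger

lemma is_succ_blk:
  assumes "x \<in> A" "is_succ A lt x y" shows "y \<in> blk x"
proof -
  have yA: "y \<in> A" and xy: "lt x y" using assms unfolding is_succ_def by auto
  have "betw A lt x y = {}"
  proof -
    have "\<not> (lt y w \<and> lt w x)" if "w \<in> A" for w
      using that tr[OF yA _ assms(1)] asy[OF assms(1) yA xy] by blast
    then show ?thesis using assms(2) unfolding betw_def is_succ_def by blast
  qed
  then show ?thesis using assms(1) yA by (simp add: block_def sim1_def)
qed

lemma sc_blk: "x \<in> A \<Longrightarrow> sc x \<in> blk x"
  using is_succ_blk succ_fn_eq succ_fn_none in_blk by metis

lemma sc_A: "x \<in> A \<Longrightarrow> sc x \<in> A"
  using sc_blk blk_A by blast

lemma sc_iter_blk: "x \<in> A \<Longrightarrow> (sc ^^ n) x \<in> blk x"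
proof (induction n)
  case 0 then show ?case by (simp add: in_blk)
next
  case (Suc n)
  have "(sc ^^ Suc n) x = sc ((sc ^^ n) x)" by simp
  moreover have "(sc ^^ n) x \<in> A" using Suc blk_A by blast
  ultimately show ?case using sc_blk Suc blk_eq by metis
qed

lemma blk_succ_iter:
  "y \<in> blk x \<Longrightarrow> lt x y \<Longrightarrow> \<exists>n. y = (sc ^^ n) x"
proof (induction "card (betw A lt x y)" arbitrary: y rule: less_induct)
  case less
  have xA: "x \<in> A" and yA: "y \<in> A" using less.prems blk_A by auto
  let ?F = "betw A lt x y"
  have finF: "finite ?F" using less.prems blk_finite_betw by blast
  show ?case
  proof (cases "?F = {}")
    case True
    then have "is_succ A lt x y" using yA less.prems unfolding is_succ_def betw_def by blast
    then have "y = (sc ^^ 1) x" using succ_fn_eq by simp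
    then show ?thesis by blast
  next
    case False
    have FA: "?F \<subseteq> A" unfolding betw_def by blast
    obtain m where m: "m \<in> ?F" "\<forall>z\<in>?F. z \<noteq> m \<longrightarrow> lt z m"
      using finite_max[OF slo finF False FA] by blast
    have mA: "m \<in> A" using m FA by blast
    have xm: "lt x m" and my: "lt m y"
      using m(1) less.prems(2) asy[OF xA yA] tr[OF yA mA xA] unfolding betw_def by auto
    have mblk: "m \<in> blk x" using blk_convex[OF in_blk[OF xA] less.prems(1) mA xm my] .
    have sub: "betw A lt x m \<subset> ?F"
    proof -
      have "betw A lt x m \<subseteq> ?F" unfolding betw_def using tr xA mA yA xm my asy by blast
      moreover have "m \<notin> betw A lt x m" unfolding betw_def using irr mA by blast
      ultimately show ?thesis using m(1) by blast
    qed
    then have "card (betw A lt x m) < card ?F" using finF psubset_card_mono by blast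
    then obtain k where k: "m = (sc ^^ k) x" using less.hyps mblk xm by blast
    have "is_succ A lt m y"
    proof -
      have "\<not> (lt m z \<and> lt z y)" if zA: "z \<in> A" for z
      proof
        assume "lt m z \<and> lt z y"
        then have "z \<in> ?F" "z \<noteq> m" using tr[OF xA mA zA] xm zA irr[OF mA] unfolding betw_def by auto
        then have "lt z m" using m(2) by blast
        then show False using \<open>lt m z \<and> lt z y\<close> asy[OF mA zA] by blast
      qed
      then show ?thesis unfolding is_succ_def using yA my by blast
    qed
    then have "y = (sc ^^ Suc k) x" using succ_fn_eq k by simp
    then show ?thesis by blast
  qed
qed

end



context slo
begin

lemma blk_pred_iter:
  assumes "y \<in> blk x" "lt y x" shows "\<exists>n. y = (pc ^^ n) x"
proof -
  interpret fl: slo A "\<lambda>x y. lt y x" by (rule flip_slo)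
  have "y \<in> block A (\<lambda>x y. lt y x) x" using assms(1) by (simp add: block_flip[of A lt])
  from fl.blk_succ_iter[OF this] assms(2) have "\<exists>n. y = (succ_fn A (\<lambda>x y. lt y x) ^^ n) x" by simp
  then show ?thesis by (simp add: succ_flip[of A lt])
qed

lemma pc_blk: "x \<in> A \<Longrightarrow> pc x \<in> blk x"
proof -
  interpret fl: slo A "\<lambda>x y. lt y x" by (rule flip_slo)
  assume "x \<in> A"
  from fl.sc_blk[OF this] show ?thesis by (simp add: block_flip[of A lt] succ_flip[of A lt])
qed

lemma pc_A: "x \<in> A \<Longrightarrow> pc x \<in> A"
  using pc_blk blk_A by blast

lemma pc_iter_blk: "x \<in> A \<Longrightarrow> (pc ^^ n) x \<in> blk x"
proof -
  interpret fl: slo A "\<lambda>x y. lt y x" by (rule flip_slo)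
  assume "x \<in> A"
  from fl.sc_iter_blk[OF this] show ?thesis by (simp add: block_flip[of A lt] succ_flip[of A lt])
qed

lemma closed_iter:
  assumes "\<forall>z\<in>S. sc z \<in> S \<and> pc z \<in> S" "x \<in> S"
  shows "(sc ^^ n) x \<in> S \<and> (pc ^^ n) x \<in> S"
  using assms by (induction n) auto

lemma blk_in_closed:
  assumes "\<forall>z\<in>S. sc z \<in> S \<and> pc z \<in> S" "x \<in> S" "S \<subseteq> A"
  shows "blk x \<subseteq> S"
proof
  fix y assume y: "y \<in> blk x"
  have yA: "y \<in> A" and xA: "x \<in> A" using y blk_A by auto
  consider "y = x" | "lt x y" | "lt y x" using tot[OF xA yA] by blast
  then show "y \<in> S"
  proof cases
    case 1 then show ?thesis using assms by simp
  next
    case 2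
    then obtain n where "y = (sc ^^ n) x" using blk_succ_iter y by blast
    then show ?thesis using closed_iter[OF assms(1,2)] by simp
  next
    case 3
    then obtain n where "y = (pc ^^ n) x" using blk_pred_iter y by blast
    then show ?thesis using closed_iter[OF assms(1,2)] by simp
  qed
qed

lemma blk_closed: "\<forall>z\<in>\<Union>(blk ` X). sc z \<in> \<Union>(blk ` X) \<and> pc z \<in> \<Union>(blk ` X)"
proof
  fix z assume "z \<in> \<Union>(blk ` X)"
  then obtain x where x: "x \<in> X" "z \<in> blk x" by blast
  have zA: "z \<in> A" using x blk_A by blast
  have "sc z \<in> blk x" using sc_blk[OF zA] blk_eq[OF x(2)] by simp
  moreover have "pc z \<in> blk x" using pc_blk[OF zA] blk_eq[OF x(2)] by simp
  ultimately show "sc z \<in> \<Union>(blk ` X) \<and> pc z \<in> \<Union>(blk ` X)" using x(1) by blast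
qed

lemma gen_sp_eq:
  assumes "X \<subseteq> A" shows "gen_sp A lt X = \<Union>(blk ` X)"
proof
  let ?U = "\<Union>(blk ` X)"
  have "?U \<in> {S. X \<subseteq> S \<and> S \<subseteq> A \<and> (\<forall>x\<in>S. sc x \<in> S \<and> pc x \<in> S)}"
    using in_blk assms blk_subA blk_closed[of X] by blast
  then show "gen_sp A lt X \<subseteq> ?U" unfolding gen_sp_def by (rule Inter_lower)
next
  show "\<Union>(blk ` X) \<subseteq> gen_sp A lt X"
  proof
    fix y assume "y \<in> \<Union>(blk ` X)"
    then obtain x where x: "x \<in> X" "y \<in> blk x" by blast
    show "y \<in> gen_sp A lt X" unfolding gen_sp_def
    proof (rule InterI)
      fix S assume "S \<in> {S. X \<subseteq> S \<and> S \<subseteq> A \<and> (\<forall>x\<in>S. sc x \<in> S \<and> pc x \<in> S)}"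
      then have "X \<subseteq> S" "S \<subseteq> A" "\<forall>x\<in>S. sc x \<in> S \<and> pc x \<in> S" by auto
      then show "y \<in> S" using blk_in_closed x by blast
    qed
  qed
qed

lemma comm_iter:
  assumes "\<forall>z\<in>U. sc z \<in> U \<and> pc z \<in> U" "\<forall>z\<in>U. f (sc z) = sc (f z) \<and> f (pc z) = pc (f z)" "x \<in> U"
  shows "f ((sc ^^ n) x) = (sc ^^ n) (f x) \<and> f ((pc ^^ n) x) = (pc ^^ n) (f x)"
proof (induction n)
  case 0 then show ?case by simp
next
  case (Suc n)
  have "(sc ^^ n) x \<in> U \<and> (pc ^^ n) x \<in> U" using closed_iter[OF assms(1,3)] .
  then show ?case using Suc assms(2) by simp
qed

lemma f_blk:
  assumes "U \<subseteq> A" "\<forall>z\<in>U. f z \<in> A" "\<forall>z\<in>U. sc z \<in> U \<and> pc z \<in> U"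
    "\<forall>z\<in>U. f (sc z) = sc (f z) \<and> f (pc z) = pc (f z)" "x \<in> U"
  shows "f ` blk x = blk (f x)"
proof
  have xA: "x \<in> A" using assms by blast
  have fxA: "f x \<in> A" using assms by blast
  show "f ` blk x \<subseteq> blk (f x)"
  proof
    fix z assume "z \<in> f ` blk x"
    then obtain y where y: "y \<in> blk x" "z = f y" by blast
    have yA: "y \<in> A" using y blk_A by blast
    consider "y = x" | "lt x y" | "lt y x" using tot[OF xA yA] by blast
    then show "z \<in> blk (f x)"
    proof cases
      case 1 then show ?thesis using y in_blk[OF fxA] by simp
    next
      case 2
      then obtain n where "y = (sc ^^ n) x" using blk_succ_iter y by blast
      then have "z = (sc ^^ n) (f x)" using comm_iter[OF assms(3,4,5)] y by simp
      then show ?thesis using sc_iter_blk[OF fxA] by simp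
    next
      case 3
      then obtain n where "y = (pc ^^ n) x" using blk_pred_iter y by blast
      then have "z = (pc ^^ n) (f x)" using comm_iter[OF assms(3,4,5)] y by simp
      then show ?thesis using pc_iter_blk[OF fxA] by simp
    qed
  qed
  show "blk (f x) \<subseteq> f ` blk x"
  proof
    fix z assume z: "z \<in> blk (f x)"
    have zA: "z \<in> A" using z blk_A by blast
    consider "z = f x" | "lt (f x) z" | "lt z (f x)" using tot[OF fxA zA] by blast
    then show "z \<in> f ` blk x"
    proof cases
      case 1 then show ?thesis using in_blk[OF xA] by simp
    next
      case 2
      then obtain n where "z = (sc ^^ n) (f x)" using blk_succ_iter z by blast
      then have "z = f ((sc ^^ n) x)" using comm_iter[OF assms(3,4,5)] by simp
      then show ?thesis using sc_iter_blk[OF xA] by blast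
    next
      case 3
      then obtain n where "z = (pc ^^ n) (f x)" using blk_pred_iter z by blast
      then have "z = f ((pc ^^ n) x)" using comm_iter[OF assms(3,4,5)] by simp
      then show ?thesis using pc_iter_blk[OF xA] by blast
    qed
  qed
qed

lemma carrier_disj: "B \<in> Phi_carrier A lt \<Longrightarrow> E \<in> Phi_carrier A lt \<Longrightarrow> z \<in> B \<Longrightarrow> z \<in> E \<Longrightarrow> B = E"
  using carrier_blk by metis

lemma Phi_less_blk:
  assumes B: "B \<in> Phi_carrier A lt" and E: "E \<in> Phi_carrier A lt" and "B \<noteq> E" "x \<in> B" "y \<in> E"
  shows "Phi_less A lt B E \<longleftrightarrow> lt x y"
proof
  assume "lt x y" then show "Phi_less A lt B E" using assms unfolding Phi_less_def by blast
next
  assume "Phi_less A lt B E"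
  then obtain p q where pq: "p \<in> B" "q \<in> E" "lt p q" unfolding Phi_less_def by blast
  have xA: "x \<in> A" and yA: "y \<in> A" and pA: "p \<in> A" and qA: "q \<in> A"
    using carrier_sub[OF B] carrier_sub[OF E] assms pq by auto
  have Bx: "B = blk x" using carrier_blk[OF B assms(4)] .
  have Cy: "E = blk y" using carrier_blk[OF E assms(5)] .
  show "lt x y"
  proof (rule ccontr)
    assume nxy: "\<not> lt x y"
    have "x \<noteq> y" using carrier_disj[OF B E] assms by blast
    then have yx: "lt y x" using tot[OF xA yA] nxy by blast
    consider "p = y" | "lt p y" | "lt y p" using tot[OF pA yA] by blast
    then show False
    proof cases
      case 1 then show ?thesis using carrier_disj[OF B E] pq assms by blast
    next
      case 2
      then have "y \<in> blk x" using blk_convex[of p x x y] pq(1) Bx in_blk[OF xA] yA yx by blast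
      then show ?thesis using Bx assms carrier_disj[OF B E] by blast
    next
      case 3
      then have "p \<in> blk y" using blk_convex[of y y q p] pq Cy in_blk[OF yA] pA by blast
      then show ?thesis using Cy pq carrier_disj[OF B E] assms by blast
    qed
  qed
qed

lemma oiso_blk_sc:
  assumes g: "oiso g B lt D lt" and B: "B \<in> Phi_carrier A lt" and D: "D \<in> Phi_carrier A lt" and x: "x \<in> B"
  shows "g (sc x) = sc (g x)"
proof -
  have bij: "bij_betw g B D" and ord: "\<forall>a\<in>B. \<forall>b\<in>B. lt a b \<longleftrightarrow> lt (g a) (g b)"
    using g unfolding oiso_def by auto
  have gB: "g ` B = D" using bij by (simp add: bij_betw_def)
  have xA: "x \<in> A" using carrier_sub[OF B] x by blast
  have Bx: "B = blk x" using carrier_blk[OF B x] .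
  have gx: "g x \<in> D" using gB x by blast
  have Dgx: "D = blk (g x)" using carrier_blk[OF D gx] .
  have BA: "B \<subseteq> A" and DA: "D \<subseteq> A" using carrier_sub B D by auto
  show ?thesis
  proof (cases "\<exists>y. is_succ A lt x y")
    case True
    then obtain y where y: "is_succ A lt x y" by blast
    have yB: "y \<in> B" using is_succ_blk[OF xA y] Bx by simp
    have "is_succ A lt (g x) (g y)"
    proof -
      have gy: "g y \<in> D" using gB yB by blast
      have lxy: "lt x y" using y unfolding is_succ_def by blast
      have "\<not> (lt (g x) z \<and> lt z (g y))" if zA: "z \<in> A" for z
      proof
        assume zz: "lt (g x) z \<and> lt z (g y)"
        have "z \<in> D" using blk_convex[of "g x" "g x" "g y" z] zz zA gx gy Dgx by blast
        then obtain w where w: "w \<in> B" "z = g w" using gB by blast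
        have "lt x w" "lt w y" using ord x yB w zz by auto
        then show False using y w BA unfolding is_succ_def by blast
      qed
      moreover have "lt (g x) (g y)" using ord x yB lxy by blast
      ultimately show ?thesis unfolding is_succ_def using gy DA by blast
    qed
    then show ?thesis using succ_fn_eq y by simp
  next
    case False
    have "\<not> (\<exists>z. is_succ A lt (g x) z)"
    proof
      assume "\<exists>z. is_succ A lt (g x) z"
      then obtain z where z: "is_succ A lt (g x) z" by blast
      have zD: "z \<in> D" using is_succ_blk[OF _ z] gx DA Dgx by blast
      then obtain w where w: "w \<in> B" "z = g w" using gB by blast
      have "is_succ A lt x w"
      proof -
        have "\<not> (lt x u \<and> lt u w)" if uA: "u \<in> A" for u
        proof
          assume uu: "lt x u \<and> lt u w"
          have uB: "u \<in> B" using blk_convex[of x x w u] uu uA x w Bx by blast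
          have "lt (g x) (g u) \<and> lt (g u) (g w)" using ord x uB w uu by blast
          then show False using z w gB uB unfolding is_succ_def using DA by blast
        qed
        moreover have "lt x w" using ord x w z unfolding is_succ_def by blast
        ultimately show ?thesis unfolding is_succ_def using w BA by blast
      qed
      then show False using False by blast
    qed
    then show ?thesis using succ_fn_none False by metis
  qed
qed

lemma oiso_flip: "oiso g B lt D lt \<Longrightarrow> oiso g B (\<lambda>x y. lt y x) D (\<lambda>x y. lt y x)"
  unfolding oiso_def by blast

lemma carrier_flip: "Phi_carrier A (\<lambda>x y. lt y x) = Phi_carrier A lt"
  unfolding Phi_carrier_def by (simp add: block_flip[of A lt])

lemma oiso_blk_pc:
  assumes g: "oiso g B lt D lt" and B: "B \<in> Phi_carrier A lt" and D: "D \<in> Phi_carrier A lt" and x: "x \<in> B"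
  shows "g (pc x) = pc (g x)"
proof -
  interpret fl: slo A "\<lambda>x y. lt y x" by (rule flip_slo)
  have "g (succ_fn A (\<lambda>x y. lt y x) x) = succ_fn A (\<lambda>x y. lt y x) (g x)"
    using fl.oiso_blk_sc[OF oiso_flip[OF g]] B D x by (simp add: carrier_flip)
  then show ?thesis by (simp add: succ_flip[of A lt])
qed

end



lemma col_inv:
  assumes g: "oiso g B lt D lt"
  shows "Phi_col A lt B c = Phi_col A lt D c"
proof -
  have i1: "order_iso_to B lt D lt" using g order_iso_to_oiso by blast
  have i2: "order_iso_to D lt B lt" using order_iso_to_sym[OF i1] .
  have bij: "bij_betw g B D" using g unfolding oiso_def by blast
  show ?thesis
  proof (cases c)
    case W then show ?thesis using order_iso_to_trans i1 i2 by (metis Phi_col.simps(1))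
  next
    case Z then show ?thesis using order_iso_to_trans i1 i2 by (metis Phi_col.simps(2))
  next
    case SW then show ?thesis using order_iso_to_trans i1 i2 by (metis Phi_col.simps(3))
  next
    case (C n) then show ?thesis using bij_betw_finite[OF bij] bij_betw_same_card[OF bij] by simp
  qed
qed

context slo
begin

lemma min_rank_fin:
  assumes "S \<subseteq> blk x" "m \<in> S" "\<forall>y\<in>S. y \<noteq> m \<longrightarrow> lt m y"
  shows "\<forall>y\<in>S. finite {z\<in>S. lt z y}"
proof
  fix y assume y: "y \<in> S"
  have mA: "m \<in> A" and yA: "y \<in> A" using assms y blk_A by auto
  have "y \<in> blk m" using assms y blk_eq by (metis subsetD)
  then have fin: "finite (betw A lt m y)" by (rule blk_finite_betw)
  have "{z\<in>S. lt z y} \<subseteq> insert m (betw A lt m y)"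
  proof
    fix z assume z: "z \<in> {z\<in>S. lt z y}"
    then have "z = m \<or> lt m z" using assms(3) by blast
    then show "z \<in> insert m (betw A lt m y)" using z assms(1) blk_A unfolding betw_def by blast
  qed
  then show "finite {z\<in>S. lt z y}" using fin finite_subset by blast
qed

lemma infinite_min_W:
  assumes "S \<subseteq> blk x" "infinite S" "m \<in> S" "\<forall>y\<in>S. y \<noteq> m \<longrightarrow> lt m y"
  shows "oiso (\<lambda>y. card {z\<in>S. lt z y}) S lt (UNIV :: nat set) (<)"
proof -
  have "S \<subseteq> A" using assms(1) blk_subA by blast
  then have s: "strict_linear_on S lt" using slo_sub[OF slo] by blast
  show ?thesis using rank_infinite[OF s min_rank_fin[OF assms(1,3,4)] assms(2)] .
qed

lemma infinite_max_SW:
  assumes "S \<subseteq> blk x" "infinite S" "m \<in> S" "\<forall>y\<in>S. y \<noteq> m \<longrightarrow> lt y m"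
  shows "oiso (\<lambda>y. card {z\<in>S. lt y z}) S lt (UNIV :: nat set) (\<lambda>a b. a > b)"
proof -
  interpret fl: slo A "\<lambda>x y. lt y x" by (rule flip_slo)
  have S': "S \<subseteq> block A (\<lambda>x y. lt y x) x" using assms(1) by (simp add: block_flip[of A lt])
  have "oiso (\<lambda>y. card {z\<in>S. lt y z}) S (\<lambda>x y. lt y x) (UNIV :: nat set) (<)"
    using fl.infinite_min_W[OF S' assms(2,3)] assms(4) by simp
  then show ?thesis unfolding oiso_def by blast
qed

lemma B1_infinite:
  assumes xA: "x \<in> A" and nomax: "\<not> (\<exists>M\<in>blk x. \<forall>y\<in>blk x. y \<noteq> M \<longrightarrow> lt y M)"
  shows "infinite {y\<in>blk x. y = x \<or> lt x y}"
proof
  let ?B1 = "{y\<in>blk x. y = x \<or> lt x y}"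
  assume fin: "finite ?B1"
  have ne: "?B1 \<noteq> {}" using in_blk[OF xA] by blast
  have sub: "?B1 \<subseteq> A" using blk_subA by blast
  obtain M where M: "M \<in> ?B1" "\<forall>y\<in>?B1. y \<noteq> M \<longrightarrow> lt y M"
    using finite_max[OF slo fin ne sub] by blast
  have MA: "M \<in> A" using M sub by blast
  obtain y where y: "y \<in> blk x" "y \<noteq> M" "\<not> lt y M" using nomax M(1) by blast
  have yA: "y \<in> A" using y blk_A by blast
  have My: "lt M y" using tot[OF yA MA] y by blast
  have "y = x \<or> lt x y"
  proof -
    have "M = x \<or> lt x M" using M(1) by blast
    then show ?thesis using My tr[OF xA MA yA] by blast
  qed
  then have "y \<in> ?B1" using y by blast
  then have "lt y M" using M(2) y(2) by blast
  then show False using y(3) by blast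
qed

lemma B2_infinite:
  assumes xA: "x \<in> A" and nomin: "\<not> (\<exists>M\<in>blk x. \<forall>y\<in>blk x. y \<noteq> M \<longrightarrow> lt M y)"
  shows "infinite {y\<in>blk x. y = x \<or> lt y x}"
proof -
  interpret fl: slo A "\<lambda>x y. lt y x" by (rule flip_slo)
  show ?thesis using fl.B1_infinite[OF xA] nomin by (simp add: block_flip[of A lt])
qed

lemma Z_case:
  assumes xA: "x \<in> A"
    and nomin: "\<not> (\<exists>M\<in>blk x. \<forall>y\<in>blk x. y \<noteq> M \<longrightarrow> lt M y)"
    and nomax: "\<not> (\<exists>M\<in>blk x. \<forall>y\<in>blk x. y \<noteq> M \<longrightarrow> lt y M)"
  shows "order_iso_to (blk x) lt (UNIV :: int set) (<)"
proof -
  define B1 where "B1 = {y\<in>blk x. y = x \<or> lt x y}"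
  define B2 where "B2 = {y\<in>blk x. y = x \<or> lt y x}"
  define r1 where "r1 = (\<lambda>y. card {z\<in>B1. lt z y})"
  define r2 where "r2 = (\<lambda>y. card {z\<in>B2. lt y z})"
  have inf1: "infinite B1" unfolding B1_def using B1_infinite[OF xA nomax] .
  have inf2: "infinite B2" unfolding B2_def using B2_infinite[OF xA nomin] .
  have s1: "B1 \<subseteq> blk x" and s2: "B2 \<subseteq> blk x" unfolding B1_def B2_def by auto
  have x1: "x \<in> B1" and x2: "x \<in> B2" unfolding B1_def B2_def using in_blk[OF xA] by auto
  have min1: "\<forall>y\<in>B1. y \<noteq> x \<longrightarrow> lt x y" unfolding B1_def by blast
  have max2: "\<forall>y\<in>B2. y \<noteq> x \<longrightarrow> lt y x" unfolding B2_def by blast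
  have o1: "oiso r1 B1 lt (UNIV :: nat set) (<)"
    unfolding r1_def using infinite_min_W[OF s1 inf1 x1 min1] .
  have o2: "oiso r2 B2 lt (UNIV :: nat set) (\<lambda>a b. a > b)"
    unfolding r2_def using infinite_max_SW[OF s2 inf2 x2 max2] .
  have ord1: "\<forall>a\<in>B1. \<forall>b\<in>B1. lt a b \<longleftrightarrow> r1 a < r1 b" using o1 unfolding oiso_def by blast
  have ord2: "\<forall>a\<in>B2. \<forall>b\<in>B2. lt a b \<longleftrightarrow> r2 a > r2 b" using o2 unfolding oiso_def by blast
  have on1: "r1 ` B1 = UNIV" using o1 unfolding oiso_def bij_betw_def by blast
  have on2: "r2 ` B2 = UNIV" using o2 unfolding oiso_def bij_betw_def by blast
  have inj1: "inj_on r1 B1" using o1 unfolding oiso_def bij_betw_def by blast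
  have inj2: "inj_on r2 B2" using o2 unfolding oiso_def bij_betw_def by blast
  have r1x: "r1 x = 0"
  proof -
    have e: "{z\<in>B1. lt z x} = {}" unfolding B1_def using irr[OF xA] asy[OF xA] blk_A by blast
    show ?thesis unfolding r1_def by (simp only: e card.empty)
  qed
  have r2x: "r2 x = 0"
  proof -
    have e: "{z\<in>B2. lt x z} = {}" unfolding B2_def using irr[OF xA] asy[OF xA] blk_A by blast
    show ?thesis unfolding r2_def by (simp only: e card.empty)
  qed
  have pos1: "y \<in> B1 \<Longrightarrow> y \<noteq> x \<Longrightarrow> r1 y > 0" for y
    using inj1 x1 r1x unfolding inj_on_def by (metis gr0I)
  have pos2: "y \<in> B2 \<Longrightarrow> y \<noteq> x \<Longrightarrow> r2 y > 0" for y
    using inj2 x2 r2x unfolding inj_on_def by (metis gr0I)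
  have both: "y \<in> B1 \<Longrightarrow> y \<in> B2 \<Longrightarrow> y = x" for y
    unfolding B1_def B2_def using asy[OF xA] blk_A by blast
  have cover: "y \<in> blk x \<Longrightarrow> y \<in> B1 \<or> y \<in> B2" for y
    unfolding B1_def B2_def using tot[OF xA] blk_A by blast
  define phi where "phi = (\<lambda>y. if y \<in> B1 then int (r1 y) else - int (r2 y))"
  have phi2: "y \<in> B2 \<Longrightarrow> phi y = - int (r2 y)" for y
    unfolding phi_def using both r1x r2x by auto
  have sl: "strict_linear_on (blk x) lt" using slo_sub[OF slo blk_subA] .
  have mono: "\<forall>a\<in>blk x. \<forall>b\<in>blk x. lt a b \<longrightarrow> phi a < phi b"
  proof (intro ballI impI)
    fix a b assume a: "a \<in> blk x" and b: "b \<in> blk x" and ab: "lt a b"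
    have aA: "a \<in> A" and bA: "b \<in> A" using a b blk_A by auto
    show "phi a < phi b"
    proof (cases "a \<in> B1")
      case a1: True
      show ?thesis
      proof (cases "b \<in> B1")
        case True then show ?thesis using a1 ord1 ab unfolding phi_def by auto
      next
        case False
        then have b2: "b \<in> B2" "b \<noteq> x" using cover b x1 by auto
        have "lt b x" using max2 b2 by blast
        moreover have "a = x \<or> lt x a" using a1 unfolding B1_def by blast
        ultimately have False using ab tr[OF xA aA bA] asy[OF xA bA] by blast
        then show ?thesis ..
      qed
    next
      case a1: False
      then have a2: "a \<in> B2" "a \<noteq> x" using cover a x1 by auto
      show ?thesis
      proof (cases "b \<in> B1")
        case True
        then show ?thesis using pos2[OF a2] phi2[OF a2(1)] unfolding phi_def by simp
      next
        case False
        then have b2: "b \<in> B2" using cover b by auto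
        then show ?thesis using phi2 a2 ord2 ab by auto
      qed
    qed
  qed
  have img: "phi ` blk x = UNIV"
  proof (rule set_eqI, rule iffI)
    fix n :: int
    show "n \<in> phi ` blk x"
    proof (cases "n \<ge> 0")
      case True
      obtain y where y: "y \<in> B1" "r1 y = nat n" using on1 by (metis UNIV_I imageE)
      then have "phi y = n" unfolding phi_def using True by simp
      then show ?thesis using y s1 by blast
    next
      case False
      obtain y where y: "y \<in> B2" "r2 y = nat (- n)" using on2 by (metis UNIV_I imageE)
      then have "y \<noteq> x" using r2x False by auto
      then have "phi y = n" using phi2[OF y(1)] y False by simp
      then show ?thesis using y s2 by blast
    qed
  qed auto
  have "oiso phi (blk x) lt (UNIV :: int set) (<)" by (rule strict_mono_oiso[OF sl mono img])
  then show ?thesis using order_iso_to_oiso by blast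
qed

lemma classify:
  assumes xA: "x \<in> A" shows "\<exists>c. Phi_col A lt (blk x) c"
proof (cases "finite (blk x)")
  case True
  have "card (blk x) \<ge> 1" using True in_blk[OF xA] by (metis One_nat_def Suc_leI card_gt_0_iff empty_iff)
  then have "Phi_col A lt (blk x) (C (card (blk x)))" using True by simp
  then show ?thesis by blast
next
  case inf: False
  show ?thesis
  proof (cases "\<exists>M\<in>blk x. \<forall>y\<in>blk x. y \<noteq> M \<longrightarrow> lt M y")
    case True
    then obtain m where "m \<in> blk x" "\<forall>y\<in>blk x. y \<noteq> m \<longrightarrow> lt m y" by blast
    from infinite_min_W[OF order_refl inf this] have "Phi_col A lt (blk x) W"
      unfolding Phi_col.simps order_iso_to_oiso by blast
    then show ?thesis by blast
  next
    case nomin: False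
    show ?thesis
    proof (cases "\<exists>M\<in>blk x. \<forall>y\<in>blk x. y \<noteq> M \<longrightarrow> lt y M")
      case True
      then obtain m where "m \<in> blk x" "\<forall>y\<in>blk x. y \<noteq> m \<longrightarrow> lt y m" by blast
      from infinite_max_SW[OF order_refl inf this] have "Phi_col A lt (blk x) SW"
        unfolding Phi_col.simps order_iso_to_oiso by blast
      then show ?thesis by blast
    next
      case False
      have "Phi_col A lt (blk x) Z" using Z_case[OF xA nomin False] by simp
      then show ?thesis by blast
    qed
  qed
qed

lemma same_col_iso:
  assumes B: "B \<in> Phi_carrier A lt" and D: "D \<in> Phi_carrier A lt"
    and cB: "Phi_col A lt B c" and cD: "Phi_col A lt D c"
  shows "order_iso_to B lt D lt"
proof (cases c)
  case W then show ?thesis using cB cD order_iso_to_sym order_iso_to_trans by (metis Phi_col.simps(1))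
next
  case Z then show ?thesis using cB cD order_iso_to_sym order_iso_to_trans by (metis Phi_col.simps(2))
next
  case SW then show ?thesis using cB cD order_iso_to_sym order_iso_to_trans by (metis Phi_col.simps(3))
next
  case (C n)
  have fB: "finite B" "card B = n" and fD: "finite D" "card D = n" using cB cD C by auto
  have sB: "strict_linear_on B lt" using slo_sub[OF slo carrier_sub[OF B]] .
  have sD: "strict_linear_on D lt" using slo_sub[OF slo carrier_sub[OF D]] .
  have "order_iso_to B lt {0..<n} (<)" using rank_finite[OF sB fB(1)] fB(2) order_iso_to_oiso by blast
  moreover have "order_iso_to D lt {0..<n} (<)" using rank_finite[OF sD fD(1)] fD(2) order_iso_to_oiso by blast
  ultimately show ?thesis using order_iso_to_sym order_iso_to_trans by metis
qed

lemma same_cols_oiso: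
  assumes B: "B \<in> Phi_carrier A lt" and D: "D \<in> Phi_carrier A lt"
    and cols: "\<forall>c. Phi_col A lt B c \<longleftrightarrow> Phi_col A lt D c"
  shows "\<exists>g. oiso g B lt D lt"
proof -
  obtain x where x: "x \<in> A" "B = blk x" using B carrier_iff by blast
  obtain c where "Phi_col A lt B c" using classify[OF x(1)] x(2) by blast
  then show ?thesis using same_col_iso[OF B D] cols order_iso_to_oiso by metis
qed

end



lemma oiso_cong: "oiso G B r S r' \<Longrightarrow> (\<And>x. x \<in> B \<Longrightarrow> F x = G x) \<Longrightarrow> oiso F B r S r'"
  unfolding oiso_def using bij_betw_cong[of B F G S] by simp

lemma oiso_restrict:
  assumes "inj_on G S" "\<forall>x\<in>S. \<forall>y\<in>S. r x y \<longleftrightarrow> r (G x) (G y)" "B \<subseteq> S"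
  shows "oiso G B r (G ` B) r"
  unfolding oiso_def bij_betw_def using assms inj_on_subset by blast

context slo
begin

lemma Phi_less_image:
  assumes "inj_on G S" "\<forall>x\<in>S. \<forall>y\<in>S. lt x y \<longleftrightarrow> lt (G x) (G y)" "B \<subseteq> S" "D \<subseteq> S"
  shows "Phi_less A lt (G ` B) (G ` D) \<longleftrightarrow> Phi_less A lt B D"
proof -
  have "G ` B = G ` D \<longleftrightarrow> B = D" using assms inj_on_image_eq_iff by metis
  moreover have "(\<exists>x\<in>G ` B. \<exists>y\<in>G ` D. lt x y) \<longleftrightarrow> (\<exists>x\<in>B. \<exists>y\<in>D. lt x y)"
    using assms(2,3,4) by blast
  ultimately show ?thesis unfolding Phi_less_def by blast
qed

lemma glue:
  assumes P: "P \<subseteq> Phi_carrier A lt" and Q: "Q \<subseteq> Phi_carrier A lt" and h: "bij_betw h P Q"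
    and hl: "\<forall>B\<in>P. \<forall>D\<in>P. Phi_less A lt B D \<longleftrightarrow> Phi_less A lt (h B) (h D)"
    and g: "\<forall>B\<in>P. oiso g B lt (h B) lt"
  shows "bij_betw g (\<Union>P) (\<Union>Q) \<and> (\<forall>x\<in>\<Union>P. \<forall>y\<in>\<Union>P. lt x y \<longleftrightarrow> lt (g x) (g y)) \<and>
         (\<forall>x\<in>\<Union>P. g (sc x) = sc (g x) \<and> g (pc x) = pc (g x))"
proof -
  have hP: "B \<in> P \<Longrightarrow> h B \<in> Q" for B using h unfolding bij_betw_def by blast
  have hinj: "inj_on h P" using h unfolding bij_betw_def by blast
  have hQ: "h ` P = Q" using h unfolding bij_betw_def by blast
  have gB: "B \<in> P \<Longrightarrow> g ` B = h B" for B using g unfolding oiso_def bij_betw_def by blast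
  have ginjB: "B \<in> P \<Longrightarrow> inj_on g B" for B using g unfolding oiso_def bij_betw_def by blast
  have gord: "B \<in> P \<Longrightarrow> \<forall>x\<in>B. \<forall>y\<in>B. lt x y \<longleftrightarrow> lt (g x) (g y)" for B
    using g unfolding oiso_def by blast
  have inj: "inj_on g (\<Union>P)"
  proof (rule inj_onI)
    fix x y assume x: "x \<in> \<Union>P" and y: "y \<in> \<Union>P" and e: "g x = g y"
    obtain B where B: "B \<in> P" "x \<in> B" using x by blast
    obtain D where D: "D \<in> P" "y \<in> D" using y by blast
    have "g x \<in> h B" "g y \<in> h D" using gB B D by auto
    then have "h B = h D" using carrier_disj hP B D Q e by (metis subsetD)
    then have "B = D" using hinj B D unfolding inj_on_def by blast
    then show "x = y" using ginjB B D e unfolding inj_on_def by blast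
  qed
  have img: "g ` (\<Union>P) = \<Union>Q"
  proof -
    have "g ` (\<Union>P) = (\<Union>B\<in>P. g ` B)" by blast
    also have "\<dots> = (\<Union>B\<in>P. h B)" using gB by simp
    also have "\<dots> = \<Union>Q" using hQ by blast
    finally show ?thesis .
  qed
  have ord: "\<forall>x\<in>\<Union>P. \<forall>y\<in>\<Union>P. lt x y \<longleftrightarrow> lt (g x) (g y)"
  proof (intro ballI)
    fix x y assume x: "x \<in> \<Union>P" and y: "y \<in> \<Union>P"
    obtain B where B: "B \<in> P" "x \<in> B" using x by blast
    obtain D where D: "D \<in> P" "y \<in> D" using y by blast
    show "lt x y \<longleftrightarrow> lt (g x) (g y)"
    proof (cases "B = D")
      case True then show ?thesis using gord B D by blast
    next
      case False
      have BD: "B \<in> Phi_carrier A lt" "D \<in> Phi_carrier A lt" using B D P by auto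
      have hBD: "h B \<in> Phi_carrier A lt" "h D \<in> Phi_carrier A lt" using hP B D Q by auto
      have ne: "h B \<noteq> h D" using False hinj B D unfolding inj_on_def by blast
      have "g x \<in> h B" "g y \<in> h D" using gB B D by auto
      then have "Phi_less A lt (h B) (h D) \<longleftrightarrow> lt (g x) (g y)" using Phi_less_blk[OF hBD ne] by blast
      moreover have "Phi_less A lt B D \<longleftrightarrow> lt x y" using Phi_less_blk[OF BD False B(2) D(2)] .
      ultimately show ?thesis using hl B D by blast
    qed
  qed
  have sp: "\<forall>x\<in>\<Union>P. g (sc x) = sc (g x) \<and> g (pc x) = pc (g x)"
  proof
    fix x assume x: "x \<in> \<Union>P"
    obtain B where B: "B \<in> P" "x \<in> B" using x by blast
    have BC: "B \<in> Phi_carrier A lt" "h B \<in> Phi_carrier A lt" using B P hP Q by auto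
    have o: "oiso g B lt (h B) lt" using g B by blast
    show "g (sc x) = sc (g x) \<and> g (pc x) = pc (g x)"
      using oiso_blk_sc[OF o BC B(2)] oiso_blk_pc[OF o BC B(2)] by blast
  qed
  show ?thesis using inj img ord sp unfolding bij_betw_def by blast
qed


lemma dirA:
  assumes hs: "homogeneous_sp A lt"
  shows "homogeneous_col (Phi_carrier A lt) (Phi_less A lt) (Phi_col A lt)"
  unfolding homogeneous_col_def
proof (intro allI impI)
  fix XB YB f
  assume "finite XB \<and> XB \<subseteq> Phi_carrier A lt \<and> YB \<subseteq> Phi_carrier A lt \<and> bij_betw f XB YB \<and>
       (\<forall>x\<in>XB. \<forall>y\<in>XB. Phi_less A lt x y \<longleftrightarrow> Phi_less A lt (f x) (f y)) \<and>
       (\<forall>x\<in>XB. \<forall>c. Phi_col A lt x c \<longleftrightarrow> Phi_col A lt (f x) c)"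
  then have finX: "finite XB" and XB: "XB \<subseteq> Phi_carrier A lt" and YB: "YB \<subseteq> Phi_carrier A lt"
    and fb: "bij_betw f XB YB"
    and fl: "\<forall>x\<in>XB. \<forall>y\<in>XB. Phi_less A lt x y \<longleftrightarrow> Phi_less A lt (f x) (f y)"
    and fc: "\<forall>x\<in>XB. \<forall>c. Phi_col A lt x c \<longleftrightarrow> Phi_col A lt (f x) c" by auto
  have fY: "B \<in> XB \<Longrightarrow> f B \<in> YB" for B using fb unfolding bij_betw_def by blast
  have ex: "\<exists>\<phi>. oiso \<phi> B lt (f B) lt" if B: "B \<in> XB" for B
    using same_cols_oiso[of B "f B"] B XB YB fY fc by blast
  define \<sigma> where "\<sigma> = (\<lambda>B. SOME \<phi>. oiso \<phi> B lt (f B) lt)"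
  have \<sigma>: "B \<in> XB \<Longrightarrow> oiso (\<sigma> B) B lt (f B) lt" for B
    unfolding \<sigma>_def using ex someI_ex by metis
  define F where "F = (\<lambda>x. \<sigma> (blk x) x)"
  have Fo: "\<forall>B\<in>XB. oiso F B lt (f B) lt"
  proof
    fix B assume B: "B \<in> XB"
    have "x \<in> B \<Longrightarrow> F x = \<sigma> B x" for x
      unfolding F_def using carrier_blk B XB by (metis subsetD)
    then show "oiso F B lt (f B) lt" using oiso_cong \<sigma>[OF B] by metis
  qed
  have gl: "bij_betw F (\<Union>XB) (\<Union>YB) \<and> (\<forall>x\<in>\<Union>XB. \<forall>y\<in>\<Union>XB. lt x y \<longleftrightarrow> lt (F x) (F y)) \<and>
         (\<forall>x\<in>\<Union>XB. F (sc x) = sc (F x) \<and> F (pc x) = pc (F x))"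
    by (rule glue[OF XB YB fb fl Fo])
  define rep where "rep = (\<lambda>B::'a set. SOME x. x \<in> B)"
  have rep: "B \<in> Phi_carrier A lt \<Longrightarrow> rep B \<in> B" for B
    unfolding rep_def using carrier_ne by (metis some_in_eq)
  have blkrep: "B \<in> Phi_carrier A lt \<Longrightarrow> blk (rep B) = B" for B
    using rep carrier_blk by metis
  define X where "X = rep ` XB"
  define Y where "Y = rep ` YB"
  have finYB: "finite YB" using fb finX bij_betw_finite by blast
  have XA: "X \<subseteq> A" unfolding X_def using rep XB carrier_sub by blast
  have YA: "Y \<subseteq> A" unfolding Y_def using rep YB carrier_sub by blast
  have genX: "gen_sp A lt X = \<Union>XB"
  proof -
    have "blk ` X = XB" unfolding X_def using blkrep XB by (force simp: image_comp)
    then show ?thesis using gen_sp_eq[OF XA] by simp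
  qed
  have genY: "gen_sp A lt Y = \<Union>YB"
  proof -
    have "blk ` Y = YB" unfolding Y_def using blkrep YB by (force simp: image_comp)
    then show ?thesis using gen_sp_eq[OF YA] by simp
  qed
  have gl1: "bij_betw F (\<Union>XB) (\<Union>YB)" using gl by (rule conjunct1)
  have gl2: "\<forall>x\<in>\<Union>XB. \<forall>y\<in>\<Union>XB. lt x y \<longleftrightarrow> lt (F x) (F y)" using gl by blast
  have gl3: "\<forall>x\<in>\<Union>XB. F (sc x) = sc (F x) \<and> F (pc x) = pc (F x)" using gl by blast
  have fX: "finite X" unfolding X_def using finX by simp
  have fY: "finite Y" unfolding Y_def using finYB by simp
  have prem: "finite X \<and> X \<subseteq> A \<and> finite Y \<and> Y \<subseteq> A \<and>
       bij_betw F (gen_sp A lt X) (gen_sp A lt Y) \<and>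
       (\<forall>x\<in>gen_sp A lt X. \<forall>y\<in>gen_sp A lt X. lt x y \<longleftrightarrow> lt (F x) (F y)) \<and>
       (\<forall>x\<in>gen_sp A lt X. F (succ_fn A lt x) = succ_fn A lt (F x) \<and>
                            F (pred_fn A lt x) = pred_fn A lt (F x))"
    unfolding genX genY using gl1 gl2 gl3 XA YA fX fY by (intro conjI) assumption+
  obtain G where Gb: "bij_betw G A A" and Go: "\<forall>x\<in>A. \<forall>y\<in>A. lt x y \<longleftrightarrow> lt (G x) (G y)"
    and Gs: "\<forall>x\<in>A. G (sc x) = sc (G x) \<and> G (pc x) = pc (G x)"
    and GF: "\<forall>x\<in>gen_sp A lt X. G x = F x"
    using mp[OF hs[unfolded homogeneous_sp_def, THEN spec[of _ X], THEN spec[of _ Y], THEN spec[of _ F]] prem]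
    by blast
  have Ginj: "inj_on G A" and GA: "G ` A = A" using Gb unfolding bij_betw_def by auto
  have closedA: "\<forall>z\<in>A. sc z \<in> A \<and> pc z \<in> A" using sc_A pc_A by blast
  have Gblk: "x \<in> A \<Longrightarrow> G ` blk x = blk (G x)" for x
    using f_blk[of A G x] closedA Gs GA by blast
  define H where "H = (\<lambda>B. G ` B)"
  have Hc: "B \<in> Phi_carrier A lt \<Longrightarrow> H B \<in> Phi_carrier A lt" for B
    unfolding H_def carrier_iff using Gblk GA by blast
  have Hinj: "inj_on H (Phi_carrier A lt)"
    unfolding H_def inj_on_def using Ginj carrier_sub inj_on_image_eq_iff by metis
  have Hsurj: "H ` Phi_carrier A lt = Phi_carrier A lt"
  proof
    show "H ` Phi_carrier A lt \<subseteq> Phi_carrier A lt" using Hc by blast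
    show "Phi_carrier A lt \<subseteq> H ` Phi_carrier A lt"
    proof
      fix D assume "D \<in> Phi_carrier A lt"
      then obtain y where y: "y \<in> A" "D = blk y" using carrier_iff by blast
      then obtain x where x: "x \<in> A" "y = G x" using GA by blast
      then have "D = H (blk x)" unfolding H_def using Gblk y by simp
      then show "D \<in> H ` Phi_carrier A lt" using blk_carrier[OF x(1)] by blast
    qed
  qed
  have Hl: "\<forall>B\<in>Phi_carrier A lt. \<forall>D\<in>Phi_carrier A lt. Phi_less A lt B D \<longleftrightarrow> Phi_less A lt (H B) (H D)"
    unfolding H_def using Phi_less_image[OF Ginj Go] carrier_sub by metis
  have Hcol: "\<forall>B\<in>Phi_carrier A lt. \<forall>c. Phi_col A lt B c \<longleftrightarrow> Phi_col A lt (H B) c"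
    unfolding H_def using col_inv oiso_restrict[OF Ginj Go] carrier_sub by metis
  have Hf: "\<forall>B\<in>XB. H B = f B"
  proof
    fix B assume B: "B \<in> XB"
    have "H B = F ` B" unfolding H_def using GF genX B by (auto simp: image_def)
    also have "\<dots> = f B" using Fo B unfolding oiso_def bij_betw_def by blast
    finally show "H B = f B" .
  qed
  show "\<exists>g. bij_betw g (Phi_carrier A lt) (Phi_carrier A lt) \<and>
        (\<forall>x\<in>Phi_carrier A lt. \<forall>y\<in>Phi_carrier A lt. Phi_less A lt x y \<longleftrightarrow> Phi_less A lt (g x) (g y)) \<and>
        (\<forall>x\<in>Phi_carrier A lt. \<forall>c. Phi_col A lt x c \<longleftrightarrow> Phi_col A lt (g x) c) \<and>
        (\<forall>x\<in>XB. g x = f x)"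
    using Hinj Hsurj Hl Hcol Hf unfolding bij_betw_def by blast
qed


lemma dirB:
  assumes hc: "homogeneous_col (Phi_carrier A lt) (Phi_less A lt) (Phi_col A lt)"
  shows "homogeneous_sp A lt"
  unfolding homogeneous_sp_def
proof (intro allI impI)
  fix X Y f
  assume "finite X \<and> X \<subseteq> A \<and> finite Y \<and> Y \<subseteq> A \<and>
       bij_betw f (gen_sp A lt X) (gen_sp A lt Y) \<and>
       (\<forall>x\<in>gen_sp A lt X. \<forall>y\<in>gen_sp A lt X. lt x y \<longleftrightarrow> lt (f x) (f y)) \<and>
       (\<forall>x\<in>gen_sp A lt X. f (succ_fn A lt x) = succ_fn A lt (f x) \<and>
                            f (pred_fn A lt x) = pred_fn A lt (f x))"
  then have finX: "finite X" and XA: "X \<subseteq> A" and YA: "Y \<subseteq> A"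
    and fb: "bij_betw f (gen_sp A lt X) (gen_sp A lt Y)"
    and fo: "\<forall>x\<in>gen_sp A lt X. \<forall>y\<in>gen_sp A lt X. lt x y \<longleftrightarrow> lt (f x) (f y)"
    and fs: "\<forall>x\<in>gen_sp A lt X. f (sc x) = sc (f x) \<and> f (pc x) = pc (f x)"
    by auto
  define U where "U = \<Union>(blk ` X)"
  define V where "V = \<Union>(blk ` Y)"
  have genX: "gen_sp A lt X = U" unfolding U_def using gen_sp_eq[OF XA] .
  have genY: "gen_sp A lt Y = V" unfolding V_def using gen_sp_eq[OF YA] .
  have fb': "bij_betw f U V" using fb genX genY by simp
  have fo': "\<forall>x\<in>U. \<forall>y\<in>U. lt x y \<longleftrightarrow> lt (f x) (f y)" using fo genX by simp
  have fs': "\<forall>x\<in>U. f (sc x) = sc (f x) \<and> f (pc x) = pc (f x)" using fs genX by simp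
  have UA: "U \<subseteq> A" unfolding U_def using blk_subA by blast
  have VA: "V \<subseteq> A" unfolding V_def using blk_subA by blast
  have finj: "inj_on f U" and fUV: "f ` U = V" using fb' unfolding bij_betw_def by auto
  have fA: "\<forall>z\<in>U. f z \<in> A" using fUV VA by blast
  have Ucl: "\<forall>z\<in>U. sc z \<in> U \<and> pc z \<in> U" unfolding U_def by (rule blk_closed)
  have fblk: "x \<in> U \<Longrightarrow> f ` blk x = blk (f x)" for x
    using f_blk[OF UA fA Ucl fs'] by blast
  define XB where "XB = blk ` X"
  have finXB: "finite XB" unfolding XB_def using finX by simp
  have XBc: "XB \<subseteq> Phi_carrier A lt" unfolding XB_def using XA blk_carrier by blast
  have XBU: "B \<in> XB \<Longrightarrow> B \<subseteq> U" for B unfolding XB_def U_def by blast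
  define h0 where "h0 = (\<lambda>B. f ` B)"
  have h0c: "B \<in> XB \<Longrightarrow> h0 B \<in> Phi_carrier A lt" for B
  proof -
    assume B: "B \<in> XB"
    then obtain x where x: "x \<in> X" "B = blk x" unfolding XB_def by blast
    have xU: "x \<in> U" unfolding U_def using x XA in_blk by blast
    have "h0 B = blk (f x)" unfolding h0_def using fblk[OF xU] x by simp
    then show ?thesis using blk_carrier fA xU by simp
  qed
  have h0inj: "inj_on h0 XB"
    unfolding h0_def inj_on_def using finj XBU inj_on_image_eq_iff by metis
  have h0b: "bij_betw h0 XB (h0 ` XB)" using h0inj by (simp add: bij_betw_def)
  have h0l: "\<forall>B\<in>XB. \<forall>D\<in>XB. Phi_less A lt B D \<longleftrightarrow> Phi_less A lt (h0 B) (h0 D)"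
    unfolding h0_def using Phi_less_image[OF finj fo'] XBU by metis
  have h0col: "\<forall>B\<in>XB. \<forall>c. Phi_col A lt B c \<longleftrightarrow> Phi_col A lt (h0 B) c"
    unfolding h0_def using col_inv oiso_restrict[OF finj fo'] XBU by metis
  have prem: "finite XB \<and> XB \<subseteq> Phi_carrier A lt \<and> h0 ` XB \<subseteq> Phi_carrier A lt \<and> bij_betw h0 XB (h0 ` XB) \<and>
       (\<forall>x\<in>XB. \<forall>y\<in>XB. Phi_less A lt x y \<longleftrightarrow> Phi_less A lt (h0 x) (h0 y)) \<and>
       (\<forall>x\<in>XB. \<forall>c. Phi_col A lt x c \<longleftrightarrow> Phi_col A lt (h0 x) c)"
    using finXB XBc h0c h0b h0l h0col by blast
  obtain h where hb: "bij_betw h (Phi_carrier A lt) (Phi_carrier A lt)"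
    and hl: "\<forall>B\<in>Phi_carrier A lt. \<forall>D\<in>Phi_carrier A lt. Phi_less A lt B D \<longleftrightarrow> Phi_less A lt (h B) (h D)"
    and hcol: "\<forall>B\<in>Phi_carrier A lt. \<forall>c. Phi_col A lt B c \<longleftrightarrow> Phi_col A lt (h B) c"
    and hh0: "\<forall>B\<in>XB. h B = h0 B"
    using mp[OF hc[unfolded homogeneous_col_def, THEN spec[of _ XB], THEN spec[of _ "h0 ` XB"], THEN spec[of _ h0]] prem]
    by blast
  have hc': "B \<in> Phi_carrier A lt \<Longrightarrow> h B \<in> Phi_carrier A lt" for B using hb unfolding bij_betw_def by blast
  have ex: "\<exists>\<phi>. oiso \<phi> B lt (h B) lt" if B: "B \<in> Phi_carrier A lt" for B
    using same_cols_oiso[OF B hc'[OF B]] hcol B by blast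
  define \<sigma> where "\<sigma> = (\<lambda>B. SOME \<phi>. oiso \<phi> B lt (h B) lt)"
  have \<sigma>: "B \<in> Phi_carrier A lt \<Longrightarrow> oiso (\<sigma> B) B lt (h B) lt" for B
    unfolding \<sigma>_def using ex someI_ex by metis
  define g where "g = (\<lambda>x. if x \<in> U then f x else \<sigma> (blk x) x)"
  have go: "\<forall>B\<in>Phi_carrier A lt. oiso g B lt (h B) lt"
  proof
    fix B assume B: "B \<in> Phi_carrier A lt"
    show "oiso g B lt (h B) lt"
    proof (cases "B \<in> XB")
      case True
      have "oiso f B lt (h0 B) lt" unfolding h0_def using oiso_restrict[OF finj fo' XBU[OF True]] .
      then have "oiso f B lt (h B) lt" using hh0 True by simp
      moreover have "x \<in> B \<Longrightarrow> g x = f x" for x unfolding g_def using XBU[OF True] by auto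
      ultimately show ?thesis using oiso_cong by metis
    next
      case False
      have nU: "x \<in> B \<Longrightarrow> x \<notin> U" for x
      proof
        assume x: "x \<in> B" "x \<in> U"
        then obtain y where y: "y \<in> X" "x \<in> blk y" unfolding U_def by blast
        have "B = blk y" using carrier_blk[OF B x(1)] blk_eq[OF y(2)] by simp
        then show False using False y unfolding XB_def by blast
      qed
      have "x \<in> B \<Longrightarrow> g x = \<sigma> B x" for x unfolding g_def using nU carrier_blk[OF B] by auto
      then show ?thesis using oiso_cong \<sigma>[OF B] by metis
    qed
  qed
  have gl: "bij_betw g (\<Union>(Phi_carrier A lt)) (\<Union>(Phi_carrier A lt)) \<and>
      (\<forall>x\<in>\<Union>(Phi_carrier A lt). \<forall>y\<in>\<Union>(Phi_carrier A lt). lt x y \<longleftrightarrow> lt (g x) (g y)) \<and>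
      (\<forall>x\<in>\<Union>(Phi_carrier A lt). g (sc x) = sc (g x) \<and> g (pc x) = pc (g x))"
    by (rule glue[OF order_refl order_refl hb hl go])
  have gl1: "bij_betw g A A" using gl Union_carrier by simp
  have gl2: "\<forall>x\<in>A. \<forall>y\<in>A. lt x y \<longleftrightarrow> lt (g x) (g y)" using gl Union_carrier by simp
  have gl3: "\<forall>x\<in>A. g (sc x) = sc (g x) \<and> g (pc x) = pc (g x)" using gl Union_carrier by simp
  have gf: "\<forall>x\<in>gen_sp A lt X. g x = f x" unfolding genX g_def by simp
  show "\<exists>g. bij_betw g A A \<and>
        (\<forall>x\<in>A. \<forall>y\<in>A. lt x y \<longleftrightarrow> lt (g x) (g y)) \<and>
        (\<forall>x\<in>A. g (succ_fn A lt x) = succ_fn A lt (g x) \<and> g (pred_fn A lt x) = pred_fn A lt (g x)) \<and>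
        (\<forall>x\<in>gen_sp A lt X. g x = f x)"
    using gl1 gl2 gl3 gf by blast
qed

end

theorem mainTheorem3:
  fixes A :: "'a set" and lt :: "'a \<Rightarrow> 'a \<Rightarrow> bool"
  assumes "strict_linear_on A lt"
  shows "homogeneous_sp A lt \<longleftrightarrow>
         homogeneous_col (Phi_carrier A lt) (Phi_less A lt) (Phi_col A lt)"
proof -
  interpret slo A lt using assms by (simp add: slo_def)
  show ?thesis using dirA dirB by blast
qed


end
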